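(* Let $n\ge2$ and $\pi\in\mathfrak S_{n-1}(2413,4213)$, and write $\mathrm{AVA}(\pi)=\{n=k_1>k_2>\dots>k_m=1\}$. Then for each $1\le j\le m$, $$\mathrm{AVA}(T_{k_j}(\pi))=\{n+1,\,k_j+1\}\cup\{k_j,k_{j+1},\dots,k_m\}.$$
   Context: $\mathfrak S_n(2413,4213)$ is the set of permutations of $[n]$ with no subsequence order isomorphic to $2413$ or $4213$. For $k\in[n]$ and $\pi=\pi_1\cdots\pi_{n-1}\in\mathfrak S_{n-1}$, define $T_k(\pi)=\pi'_1\pi'_2\cdots\pi'_{n-1}k\in\mathfrak S_n$, where $\pi'_i=\pi_i+1$ if $\pi_i\ge k$ and $\pi'_i=\pi_i$ otherwise. For $\pi\in\mathfrak S_{n-1}(2413,4213)$, $\mathrm{AVA}(\pi)=\{k\in[n]:T_k(\pi)\in\mathfrak S_n(2413,4213)\}$; it always contains $n$ and $1$. *)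

theory Defs
  imports Main
begin

text \<open>Permutations of [n] are represented as lists in one-line notation.\<close>

definition is_perm :: "nat \<Rightarrow> nat list \<Rightarrow> bool" where
  "is_perm n p \<longleftrightarrow> length p = n \<and> distinct p \<and> set p = {1..n}"

definition contains :: "nat list \<Rightarrow> nat list \<Rightarrow> bool" where
  "contains p s \<longleftrightarrow> (\<exists>is :: nat list. length is = length s \<and> sorted_wrt (<) is
      \<and> (\<forall>i\<in>set is. i < length p)
      \<and> (\<forall>a<length s. \<forall>b<length s. (p ! (is ! a) < p ! (is ! b)) \<longleftrightarrow> (s ! a < s ! b)))"

definition Av :: "nat \<Rightarrow> nat list set" where
  "Av n = {p. is_perm n p \<and> \<not> contains p [2,4,1,3] \<and> \<not> contains p [4,2,1,3]}"

definition T :: "nat \<Rightarrow> nat list \<Rightarrow> nat list" where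
  "T k p = map (\<lambda>x. if x \<ge> k then x + 1 else x) p @ [k]"

definition AVA :: "nat list \<Rightarrow> nat set" where
  "AVA p = {k \<in> {1..length p + 1}. T k p \<in> Av (length p + 1)}"

end

theory Submission imports Defs begin
lemma all4: "(\<forall>a<(4::nat). P a) \<longleftrightarrow> P 0 \<and> P 1 \<and> P 2 \<and> P 3"
  by (auto simp: less_Suc_eq numeral_eq_Suc)

definition iso4 where "iso4 (p::nat list) (is::nat list) (s::nat list) \<longleftrightarrow> (\<forall>a<length s. \<forall>b<length s. (p!(is!a) < p!(is!b)) \<longleftrightarrow> (s!a < s!b))"

lemma contains4: "contains p [s0,s1,s2,s3] \<longleftrightarrow> (\<exists>i0 i1 i2 i3. i0<i1 \<and> i1<i2 \<and> i2<i3 \<and> i3<length p \<and>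
   iso4 p [i0,i1,i2,i3] [s0,s1,s2,s3])"
proof
  assume "contains p [s0,s1,s2,s3]"
  then obtain "is" where h: "length is = length [s0,s1,s2,s3]" "sorted_wrt (<) is" "\<forall>i\<in>set is. i < length p"
    "iso4 p is [s0,s1,s2,s3]"
    unfolding contains_def iso4_def by blast
  from h(1) obtain i0 i1 i2 i3 where e: "is = [i0,i1,i2,i3]"
    by (auto simp: length_Suc_conv)
  show "\<exists>i0 i1 i2 i3. i0<i1 \<and> i1<i2 \<and> i2<i3 \<and> i3<length p \<and> iso4 p [i0,i1,i2,i3] [s0,s1,s2,s3]"
    using h e by (intro exI[of _ i0] exI[of _ i1] exI[of _ i2] exI[of _ i3]) simp
next
  assume "\<exists>i0 i1 i2 i3. i0<i1 \<and> i1<i2 \<and> i2<i3 \<and> i3<length p \<and> iso4 p [i0,i1,i2,i3] [s0,s1,s2,s3]"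
  then obtain i0 i1 i2 i3 where h: "i0<i1" "i1<i2" "i2<i3" "i3<length p"
   "iso4 p [i0,i1,i2,i3] [s0,s1,s2,s3]"
    by blast
  show "contains p [s0,s1,s2,s3]" unfolding contains_def
    using h unfolding iso4_def by (intro exI[of _ "[i0,i1,i2,i3]"]) simp
qed

lemma iso_2413: "iso4 p [i0,i1,i2,i3] [2,4,1,3] \<longleftrightarrow> p!i2 < p!i0 \<and> p!i0 < p!i3 \<and> p!i3 < p!i1"
  unfolding iso4_def apply (simp add: less_Suc_eq numeral_eq_Suc) by auto
lemma iso_4213: "iso4 p [i0,i1,i2,i3] [4,2,1,3] \<longleftrightarrow> p!i2 < p!i1 \<and> p!i1 < p!i3 \<and> p!i3 < p!i0"
  unfolding iso4_def apply (simp add: less_Suc_eq numeral_eq_Suc) by auto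

definition bad4 :: "nat list \<Rightarrow> bool" where
 "bad4 p \<longleftrightarrow> (\<exists>i0 i1 i2 i3. i0<i1 \<and> i1<i2 \<and> i2<i3 \<and> i3 < length p \<and>
    p!i2 < min (p!i0) (p!i1) \<and> min (p!i0) (p!i1) < p!i3 \<and> p!i3 < max (p!i0) (p!i1))"

definition bad3 :: "nat list \<Rightarrow> nat \<Rightarrow> bool" where
 "bad3 p a \<longleftrightarrow> (\<exists>i j l. i<j \<and> j<l \<and> l<length p \<and> p!l < min (p!i) (p!j)
    \<and> min (p!i) (p!j) < a \<and> a \<le> max (p!i) (p!j))"

lemma pw4: "((c::nat) < a \<and> a < d \<and> d < b) \<or> (c < b \<and> b < d \<and> d < a) \<longleftrightarrow> c < min a b \<and> min a b < d \<and> d < max a b"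
  by (auto simp: min_def max_def)

lemma avoid_iff: "(\<not> contains p [2,4,1,3] \<and> \<not> contains p [4,2,1,3]) \<longleftrightarrow> \<not> bad4 p"
proof -
  have "bad4 p \<longleftrightarrow> contains p [2,4,1,3] \<or> contains p [4,2,1,3]"
    unfolding contains4 iso_2413 iso_4213 bad4_def pw4[symmetric] by blast
  then show ?thesis by blast
qed

definition sh :: "nat \<Rightarrow> nat \<Rightarrow> nat" where "sh a x = (if x \<ge> a then x+1 else x)"

lemma T_sh: "T a p = map (sh a) p @ [a]" by (simp add: T_def sh_def)
lemma T_len[simp]: "length (T a p) = Suc (length p)" by (simp add: T_sh)
lemma T_nth1: "i < length p \<Longrightarrow> T a p ! i = sh a (p!i)" by (simp add: T_sh nth_append)
lemma T_nth2: "T a p ! length p = a" by (simp add: T_sh nth_append)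

lemma P1: "(sh a c < min (sh a x) (sh a y) \<and> min (sh a x) (sh a y) < sh a d \<and> sh a d < max (sh a x) (sh a y))
  \<longleftrightarrow> (c < min x y \<and> min x y < d \<and> d < max x y)"
  by (auto simp: sh_def min_def max_def)
lemma P2: "(sh a c < min (sh a x) (sh a y) \<and> min (sh a x) (sh a y) < a \<and> a < max (sh a x) (sh a y))
  \<longleftrightarrow> (c < min x y \<and> min x y < a \<and> a \<le> max x y)"
  by (auto simp: sh_def min_def max_def)

lemma bad4_T: "bad4 (T a p) \<longleftrightarrow> bad4 p \<or> bad3 p a"
proof
  assume "bad4 (T a p)"
  then obtain i0 i1 i2 i3 where h: "i0<i1" "i1<i2" "i2<i3" "i3 < Suc (length p)"
    "T a p!i2 < min (T a p!i0) (T a p!i1)" "min (T a p!i0) (T a p!i1) < T a p!i3" "T a p!i3 < max (T a p!i0) (T a p!i1)"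
    unfolding bad4_def by auto
  show "bad4 p \<or> bad3 p a"
  proof (cases "i3 < length p")
    case True
    then have "p!i2 < min (p!i0) (p!i1) \<and> min (p!i0) (p!i1) < p!i3 \<and> p!i3 < max (p!i0) (p!i1)"
      using h P1[of a "p!i2" "p!i0" "p!i1" "p!i3"] by (simp add: T_nth1)
    then have "bad4 p" unfolding bad4_def using h True by blast
    then show ?thesis ..
  next
    case False
    then have e: "i3 = length p" using h by simp
    then have "p!i2 < min (p!i0) (p!i1) \<and> min (p!i0) (p!i1) < a \<and> a \<le> max (p!i0) (p!i1)"
      using h P2[of a "p!i2" "p!i0" "p!i1"] by (simp add: T_nth1 T_nth2)
    then have "bad3 p a" unfolding bad3_def using h e by blast
    then show ?thesis ..
  qed
next
  assume "bad4 p \<or> bad3 p a"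
  then show "bad4 (T a p)"
  proof
    assume "bad4 p"
    then obtain i0 i1 i2 i3 where h: "i0<i1" "i1<i2" "i2<i3" "i3 < length p"
      "p!i2 < min (p!i0) (p!i1) \<and> min (p!i0) (p!i1) < p!i3 \<and> p!i3 < max (p!i0) (p!i1)"
      unfolding bad4_def by auto
    then have "T a p!i2 < min (T a p!i0) (T a p!i1) \<and> min (T a p!i0) (T a p!i1) < T a p!i3 \<and> T a p!i3 < max (T a p!i0) (T a p!i1)"
      using P1[of a "p!i2" "p!i0" "p!i1" "p!i3"] by (simp add: T_nth1)
    then show ?thesis unfolding bad4_def using h by (intro exI[of _ i0] exI[of _ i1] exI[of _ i2] exI[of _ i3]) simp
  next
    assume "bad3 p a"
    then obtain i0 i1 i2 where h: "i0<i1" "i1<i2" "i2 < length p"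
      "p!i2 < min (p!i0) (p!i1) \<and> min (p!i0) (p!i1) < a \<and> a \<le> max (p!i0) (p!i1)"
      unfolding bad3_def by auto
    then have "T a p!i2 < min (T a p!i0) (T a p!i1) \<and> min (T a p!i0) (T a p!i1) < T a p!(length p) \<and> T a p!(length p) < max (T a p!i0) (T a p!i1)"
      using P2[of a "p!i2" "p!i0" "p!i1"] by (simp add: T_nth1 T_nth2)
    then show ?thesis unfolding bad4_def using h by (intro exI[of _ i0] exI[of _ i1] exI[of _ i2] exI[of _ "length p"]) simp
  qed
qed

lemma perm_T: assumes "is_perm N p" "1 \<le> a" "a \<le> N+1" shows "is_perm (N+1) (T a p)"
proof -
  have len: "length p = N" and d: "distinct p" and st: "set p = {1..N}" using assms(1) unfolding is_perm_def by auto
  have inj: "inj_on (sh a) (set p)" unfolding inj_on_def sh_def by auto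
  have nin: "a \<notin> sh a ` set p" unfolding sh_def by auto
  have "sh a ` {1..N} \<union> {a} = {1..N+1}"
  proof (rule set_eqI, rule iffI)
    fix x assume "x \<in> sh a ` {1..N} \<union> {a}" then show "x \<in> {1..N+1}" using assms by (auto simp: sh_def)
  next
    fix x assume x: "x \<in> {1..N+1}"
    show "x \<in> sh a ` {1..N} \<union> {a}"
    proof (cases "x < a")
      case True then have "sh a x = x" by (simp add: sh_def)
      then show ?thesis using x True assms by (metis UnI1 atLeastAtMost_iff image_eqI less_Suc_eq_le Suc_eq_plus1 le_trans less_imp_le_nat not_le)
    next
      case False
      show ?thesis
      proof (cases "x = a")
        case True then show ?thesis by simp
      next
        case False2: False
        then have "sh a (x - 1) = x" "x - 1 \<in> {1..N}" using False x assms by (auto simp: sh_def)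
        then show ?thesis by (metis UnI1 image_eqI)
      qed
    qed
  qed
  then show ?thesis unfolding is_perm_def T_sh using len d inj nin st by (auto simp: distinct_map)
qed

lemma AVA_char: assumes "p \<in> Av N" shows "AVA p = {a \<in> {1..N+1}. \<not> bad3 p a}"
proof -
  have pp: "is_perm N p" and nb: "\<not> bad4 p" using assms avoid_iff unfolding Av_def by auto
  then have len: "length p = N" unfolding is_perm_def by auto
  show ?thesis unfolding AVA_def Av_def len using perm_T[OF pp] nb avoid_iff[of "T _ p"] bad4_T
    by auto
qed


lemma Q1: "a \<le> k \<Longrightarrow> (sh k c < min (sh k x) (sh k y) \<and> min (sh k x) (sh k y) < a \<and> a \<le> max (sh k x) (sh k y))
  \<longleftrightarrow> (c < min x y \<and> min x y < a \<and> a \<le> max x y)"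
  by (auto simp: sh_def min_def max_def)
lemma Q2: "(sh k c < min (sh k x) (sh k y) \<and> min (sh k x) (sh k y) < k+1 \<and> k+1 \<le> max (sh k x) (sh k y))
  \<longleftrightarrow> (c < min x y \<and> min x y < k \<and> k \<le> max x y)"
  by (auto simp: sh_def min_def max_def)

lemma L_le: assumes "a \<le> k" shows "bad3 (T k p) a \<longleftrightarrow> bad3 p a"
proof
  assume "bad3 (T k p) a"
  then obtain i j l where h: "i<j" "j<l" "l< Suc (length p)" "T k p!l < min (T k p!i) (T k p!j)"
    "min (T k p!i) (T k p!j) < a" "a \<le> max (T k p!i) (T k p!j)" unfolding bad3_def by auto
  have "l \<noteq> length p"
  proof
    assume "l = length p" then show False using h assms by (auto simp: T_nth2 min_def)
  qed
  then have l: "l < length p" using h by simp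
  then have "p!l < min (p!i) (p!j) \<and> min (p!i) (p!j) < a \<and> a \<le> max (p!i) (p!j)"
    using h Q1[OF assms, of "p!l" "p!i" "p!j"] by (simp add: T_nth1)
  then show "bad3 p a" unfolding bad3_def using h l by blast
next
  assume "bad3 p a"
  then obtain i j l where h: "i<j" "j<l" "l< length p"
    "p!l < min (p!i) (p!j) \<and> min (p!i) (p!j) < a \<and> a \<le> max (p!i) (p!j)" unfolding bad3_def by auto
  then have "T k p!l < min (T k p!i) (T k p!j) \<and> min (T k p!i) (T k p!j) < a \<and> a \<le> max (T k p!i) (T k p!j)"
    using Q1[OF assms, of "p!l" "p!i" "p!j"] by (simp add: T_nth1)
  then show "bad3 (T k p) a" unfolding bad3_def using h by (intro exI[of _ i] exI[of _ j] exI[of _ l]) simp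
qed

lemma L_k1: "bad3 (T k p) (k+1) \<longleftrightarrow> bad3 p k"
proof
  assume "bad3 (T k p) (k+1)"
  then obtain i j l where h: "i<j" "j<l" "l< Suc (length p)" "T k p!l < min (T k p!i) (T k p!j)"
    "min (T k p!i) (T k p!j) < k+1" "k+1 \<le> max (T k p!i) (T k p!j)" unfolding bad3_def by auto
  have "l \<noteq> length p"
  proof
    assume "l = length p" then show False using h by (auto simp: T_nth2 min_def)
  qed
  then have l: "l < length p" using h by simp
  then have "p!l < min (p!i) (p!j) \<and> min (p!i) (p!j) < k \<and> k \<le> max (p!i) (p!j)"
    using h Q2[of k "p!l" "p!i" "p!j"] by (simp add: T_nth1)
  then show "bad3 p k" unfolding bad3_def using h l by blast
next
  assume "bad3 p k"
  then obtain i j l where h: "i<j" "j<l" "l< length p"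
    "p!l < min (p!i) (p!j) \<and> min (p!i) (p!j) < k \<and> k \<le> max (p!i) (p!j)" unfolding bad3_def by auto
  then have "T k p!l < min (T k p!i) (T k p!j) \<and> min (T k p!i) (T k p!j) < k+1 \<and> k+1 \<le> max (T k p!i) (T k p!j)"
    using Q2[of k "p!l" "p!i" "p!j"] by (simp add: T_nth1)
  then show "bad3 (T k p) (k+1)" unfolding bad3_def using h by (intro exI[of _ i] exI[of _ j] exI[of _ l]) simp
qed

lemma L_big: assumes "is_perm N p" "1 \<le> k" "k+1 < a" "a \<le> N+1" shows "bad3 (T k p) a"
proof -
  have len: "length p = N" and st: "set p = {1..N}" using assms(1) unfolding is_perm_def by auto
  have "k \<in> set p" "N \<in> set p" using st assms by auto
  then obtain ik iN where ik: "ik < N" "p!ik = k" and iN: "iN < N" "p!iN = N"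
    using len by (metis in_set_conv_nth)
  have ne: "ik \<noteq> iN" using ik iN assms by auto
  have vk: "T k p ! ik = k+1" using ik len by (simp add: T_nth1 sh_def)
  have vN: "T k p ! iN = N+1" using iN len assms by (simp add: T_nth1 sh_def)
  have vl: "T k p ! N = k" using len T_nth2 by metis
  show ?thesis
  proof (cases "ik < iN")
    case True
    show ?thesis unfolding bad3_def using True vk vN vl iN assms len
      by (intro exI[of _ ik] exI[of _ iN] exI[of _ N]) simp
  next
    case False
    then have "iN < ik" using ne by simp
    then show ?thesis unfolding bad3_def using vk vN vl ik assms len
      by (intro exI[of _ iN] exI[of _ ik] exI[of _ N]) simp
  qed
qed

lemma L_top: assumes "set q \<subseteq> {1..M}" "M < a" shows "\<not> bad3 q a"
proof
  assume "bad3 q a"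
  then obtain i j l where h: "i<j" "j<l" "l< length q" "a \<le> max (q!i) (q!j)" unfolding bad3_def by auto
  have "q!i \<in> set q" "q!j \<in> set q" using h by auto
  then have "q!i \<le> M" "q!j \<le> M" using assms(1) by auto
  then show False using h assms by (auto simp: max_def split: if_splits)
qed

lemma drop_sorted: fixes ks :: "nat list" assumes "sorted_wrt (>) ks" "j < length ks"
  shows "set (drop j ks) = {x \<in> set ks. x \<le> ks!j}"
proof (rule set_eqI, rule iffI)
  fix x assume "x \<in> set (drop j ks)"
  then obtain i where i: "i < length ks - j" "x = ks ! (j + i)" by (auto simp: in_set_conv_nth)
  have "x \<le> ks!j"
  proof (cases "i = 0")
    case True then show ?thesis using i by simp
  next
    case False
    then have "j < j + i" "j + i < length ks" using i by auto
    then show ?thesis using sorted_wrt_nth_less[OF assms(1), of j "j+i"] i by simp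
  qed
  moreover have "j+i < length ks" using i by simp
  ultimately show "x \<in> {x \<in> set ks. x \<le> ks!j}" using i nth_mem by auto
next
  fix x assume "x \<in> {x \<in> set ks. x \<le> ks!j}"
  then obtain i where i: "i < length ks" "x = ks!i" "ks!i \<le> ks!j" by (auto simp: in_set_conv_nth)
  have "\<not> i < j" using sorted_wrt_nth_less[OF assms(1), of i j] i assms by auto
  then have "x = drop j ks ! (i - j)" "i - j < length (drop j ks)" using i by auto
  then show "x \<in> set (drop j ks)" by (metis nth_mem)
qed

theorem lemma5p3:
  fixes n :: nat and p :: "nat list" and ks :: "nat list"
  assumes "n \<ge> 2"
    and "p \<in> Av (n - 1)"
    and "sorted_wrt (>) ks" and "set ks = AVA p"
    and "j < length ks"
  shows "AVA (T (ks ! j) p) = {n + 1, ks ! j + 1} \<union> set (drop j ks)"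
proof -
  define N where "N = n - 1"
  define k where "k = ks ! j"
  have nN: "n = N + 1" using assms(1) N_def by simp
  have pAv: "p \<in> Av N" using assms(2) N_def by simp
  have pp: "is_perm N p" using pAv unfolding Av_def by auto
  have len: "length p = N" using pp unfolding is_perm_def by auto
  have Ap: "AVA p = {a \<in> {1..N+1}. \<not> bad3 p a}" using AVA_char[OF pAv] .
  have kA: "k \<in> AVA p" using assms(4,5) k_def by (metis nth_mem)
  then have k1: "1 \<le> k" "k \<le> N+1" and kb: "\<not> bad3 p k" using Ap by auto
  have sAv: "T k p \<in> Av (N+1)" using kA unfolding AVA_def len by auto
  have sp: "is_perm (N+1) (T k p)" using sAv unfolding Av_def by auto
  have As: "AVA (T k p) = {a \<in> {1..N+1+1}. \<not> bad3 (T k p) a}" using AVA_char[OF sAv] .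
  have dr: "set (drop j ks) = {x \<in> {1..N+1}. \<not> bad3 p x \<and> x \<le> k}"
    using drop_sorted[OF assms(3,5)] assms(4) Ap k_def by auto
  have stop: "set (T k p) \<subseteq> {1..N+1}" using sp unfolding is_perm_def by auto
  have "{a \<in> {1..N+1+1}. \<not> bad3 (T k p) a} = {N+1+1, k+1} \<union> {x \<in> {1..N+1}. \<not> bad3 p x \<and> x \<le> k}"
  proof (rule set_eqI)
    fix a
    consider "a \<le> k" | "a = k+1" | "k+1 < a \<and> a \<le> N+1" | "a = N+1+1" | "a > N+1+1" by linarith
    then show "a \<in> {a \<in> {1..N+1+1}. \<not> bad3 (T k p) a} \<longleftrightarrow> a \<in> {N+1+1, k+1} \<union> {x \<in> {1..N+1}. \<not> bad3 p x \<and> x \<le> k}"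
    proof cases
      case 1 then show ?thesis using L_le[OF 1, of p] k1 by auto
    next
      case 2 then show ?thesis using L_k1[of k p] kb k1 by auto
    next
      case 3 then show ?thesis using L_big[OF pp k1(1), of a] k1 by auto
    next
      case 4
      have "\<not> bad3 (T k p) a" using L_top[OF stop, of a] 4 by simp
      moreover have "a \<in> {1..N+1+1}" using 4 by simp
      ultimately show ?thesis using 4 by blast
    next
      case 5 then show ?thesis using k1 by auto
    qed
  qed
  then show ?thesis using As dr nN k_def by simp
qed

end
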